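(* Let $n\ge 0$, put $N=2^n$ and $h={}_0h_n$. Define the words \begin{align*} {}_1h_{n+1}&=\delta_g(h)\,u\,\delta_g(h)\,r\,\delta_x(h)\,d\,\delta_x(h),\\ {}_2h_{n+1}&=\delta_f(h)\,u\,h\,r\,h\,d\,\delta_f(h),\\ {}_3h_{n+1}&=\delta_m(h)\,u\,\delta_g(h)\,r\,\delta_x(h)\,d\,\delta_m(h),\\ {}_4h_{n+1}&=\delta_o(h)\,u\,h\,r\,h\,d\,\delta_f(h),\\ {}_5h_{n+1}&=\delta_m(h)\,u\,\delta_g(h)\,r\,\delta_x(h)\,d\,\delta_x(h). \end{align*} Then each of these words traces a Hamiltonian path of the grid $\{0,\dots,2N-1\}^2$, with the following endpoints: \begin{enumerate} \item ${}_1h_{n+1}$ goes from $(N-1,0)$ to $(N,0)$; the endpoints are adjacent, so this is the closed Moore curve. \item ${}_2h_{n+1}$ goes from $(N-1,N-1)$ to $(N,N-1)$; the endpoints are adjacent. \item ${}_3h_{n+1}$ goes from $(0,N-1)$ to $(2N-1,N-1)$. \item ${}_4h_{n+1}$ goes from $(0,0)$ to $(N,N-1)$. \item ${}_5h_{n+1}$ goes from $(0,N-1)$ to $(N,0)$. \end{enumerate}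
   Context: Let $\Sigma=\{u,d,r,l\}$, where $u$ = up, $d$ = down, $r$ = right and $l$ = left. Set $v(u)=(0,1)$, $v(d)=(0,-1)$, $v(r)=(1,0)$ and $v(l)=(-1,0)$. For a finite word $w=w_1\cdots w_k$ over $\Sigma$ and a point $p\in\mathbb{Z}^2$, the lattice path encoded by $w$ from $p$ is the sequence $p_0=p$, $p_i=p_{i-1}+v(w_i)$ for $i=1,\dots,k$. For $m\ge 1$, say that $w$ traces a Hamiltonian path of the grid $\{0,\dots,m-1\}^2$ from $a$ to $b$ if the path encoded by $w$ from $a$ satisfies three conditions: the points $p_0,\dots,p_k$ are pairwise distinct; $\{p_0,\dots,p_k\}=\{0,\dots,m-1\}^2$, so that $k=m^2-1$; and $p_k=b$. Grid points represent the $m^2$ equal subsquares of the unit square, and consecutive points are edge-adjacent squares. Juxtaposition denotes concatenation of words. The following letter-to-letter morphisms of $\Sigma^*$ are applied letterwise: \begin{itemize} \item $\delta_o$: $u\mapsto r$, $r\mapsto u$, $d\mapsto l$, $l\mapsto d$; \item $\delta_a$: $u\mapsto l$, $r\mapsto d$, $d\mapsto r$, $l\mapsto u$; \item $\delta_g$: $u\mapsto l$, $r\mapsto u$, $d\mapsto r$, $l\mapsto d$; \item $\delta_x$: $u\mapsto r$, $r\mapsto d$, $d\mapsto l$, $l\mapsto u$; \item $\delta_f$: $u\mapsto d$, $r\mapsto l$, $d\mapsto u$, $l\mapsto r$; \item $\delta_m$: $u\mapsto d$, $r\mapsto r$, $d\mapsto u$, $l\mapsto l$. \end{itemize} The Hilbert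 words are defined recursively by ${}_0h_0=\varepsilon$ (the empty word) and \[ {}_0h_{n+1}=\delta_o({}_0h_n)\,u\,{}_0h_n\,r\,{}_0h_n\,d\,\delta_a({}_0h_n). \] For example, ${}_0h_1=urd$. *)

theory Defs
  imports Main
begin

datatype dir = U | D | R | L

fun vec :: "dir \<Rightarrow> int \<times> int" where
  "vec U = (0, 1)" | "vec D = (0, -1)" | "vec R = (1, 0)" | "vec L = (-1, 0)"

fun path_pts :: "int \<times> int \<Rightarrow> dir list \<Rightarrow> (int \<times> int) list" where
  "path_pts p [] = [p]"
| "path_pts p (c # w) = p # path_pts (fst p + fst (vec c), snd p + snd (vec c)) w"

definition traces_ham :: "nat \<Rightarrow> dir list \<Rightarrow> int \<times> int \<Rightarrow> int \<times> int \<Rightarrow> bool" where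
  "traces_ham m w a b \<longleftrightarrow>
     (let ps = path_pts a w in
        distinct ps \<and> set ps = {0..<int m} \<times> {0..<int m} \<and> last ps = b)"

fun delta_o :: "dir \<Rightarrow> dir" where
  "delta_o U = R" | "delta_o R = U" | "delta_o D = L" | "delta_o L = D"
fun delta_a :: "dir \<Rightarrow> dir" where
  "delta_a U = L" | "delta_a R = D" | "delta_a D = R" | "delta_a L = U"
fun delta_g :: "dir \<Rightarrow> dir" where
  "delta_g U = L" | "delta_g R = U" | "delta_g D = R" | "delta_g L = D"
fun delta_x :: "dir \<Rightarrow> dir" where
  "delta_x U = R" | "delta_x R = D" | "delta_x D = L" | "delta_x L = U"
fun delta_f :: "dir \<Rightarrow> dir" where
  "delta_f U = D" | "delta_f R = L" | "delta_f D = U" | "delta_f L = R"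
fun delta_m :: "dir \<Rightarrow> dir" where
  "delta_m U = D" | "delta_m R = R" | "delta_m D = U" | "delta_m L = L"

fun hilb :: "nat \<Rightarrow> dir list" where
  "hilb 0 = []"
| "hilb (Suc n) = map delta_o (hilb n) @ [U] @ hilb n @ [R] @ hilb n @ [D] @ map delta_a (hilb n)"

definition h1 :: "nat \<Rightarrow> dir list" where
  "h1 n = (let h = hilb n in map delta_g h @ [U] @ map delta_g h @ [R] @ map delta_x h @ [D] @ map delta_x h)"
definition h2 :: "nat \<Rightarrow> dir list" where
  "h2 n = (let h = hilb n in map delta_f h @ [U] @ h @ [R] @ h @ [D] @ map delta_f h)"
definition h3 :: "nat \<Rightarrow> dir list" where
  "h3 n = (let h = hilb n in map delta_m h @ [U] @ map delta_g h @ [R] @ map delta_x h @ [D] @ map delta_m h)"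
definition h4 :: "nat \<Rightarrow> dir list" where
  "h4 n = (let h = hilb n in map delta_o h @ [U] @ h @ [R] @ h @ [D] @ map delta_f h)"
definition h5 :: "nat \<Rightarrow> dir list" where
  "h5 n = (let h = hilb n in map delta_m h @ [U] @ map delta_g h @ [R] @ map delta_x h @ [D] @ map delta_x h)"

end

theory Submission imports Defs begin

definition step :: "int \<times> int \<Rightarrow> dir \<Rightarrow> int \<times> int" where
  "step q c = (fst q + fst (vec c), snd q + snd (vec c))"

lemma path_cons: "path_pts p (c # w) = p # path_pts (step p c) w"
  by (simp add: step_def)

lemma path_ne: "path_pts p w \<noteq> []"
  by (cases w) auto

lemma path_append: "path_pts p (w1 @ c # w2) = path_pts p w1 @ path_pts (step (last (path_pts p w1)) c) w2"
proof (induction w1 arbitrary: p)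
  case Nil then show ?case by (simp add: step_def)
next
  case (Cons a w1) then show ?case by (simp add: path_ne)
qed

lemma path_four:
  assumes "p2 = step (last (path_pts p1 w1)) c1"
    "p3 = step (last (path_pts p2 w2)) c2"
    "p4 = step (last (path_pts p3 w3)) c3"
  shows "path_pts p1 (w1 @ [c1] @ w2 @ [c2] @ w3 @ [c3] @ w4)
       = path_pts p1 w1 @ path_pts p2 w2 @ path_pts p3 w3 @ path_pts p4 w4"
  using assms by (simp add: path_append)

definition tr :: "(int \<times> int \<Rightarrow> int \<times> int) \<Rightarrow> int \<times> int \<Rightarrow> int \<times> int \<Rightarrow> int \<times> int" where
  "tr A p r = (fst p + fst (A r), snd p + snd (A r))"

definition linrel :: "(int \<times> int \<Rightarrow> int \<times> int) \<Rightarrow> (dir \<Rightarrow> dir) \<Rightarrow> bool" where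
  "linrel A d \<longleftrightarrow> (\<forall>r c. A (step r c) = step (A r) (d c)) \<and> A (0,0) = (0,0)"

lemma path_map_gen:
  assumes "linrel A d"
  shows "path_pts (tr A p r) (map d w) = map (tr A p) (path_pts r w)"
proof (induction w arbitrary: r)
  case Nil then show ?case by simp
next
  case (Cons c w)
  have "step (tr A p r) (d c) = tr A p (step r c)"
    using assms unfolding linrel_def by (simp add: tr_def step_def)
  then show ?case using Cons by (simp add: path_cons del: path_pts.simps)
qed

lemma path_map:
  assumes "linrel A d"
  shows "path_pts p (map d w) = map (tr A p) (path_pts (0,0) w)"
proof -
  have "tr A p (0,0) = p" using assms by (simp add: linrel_def tr_def)
  then show ?thesis using path_map_gen[OF assms, of p "(0,0)" w] by simp
qed

definition Ao :: "int \<times> int \<Rightarrow> int \<times> int" where "Ao q = (snd q, fst q)"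
definition Aa :: "int \<times> int \<Rightarrow> int \<times> int" where "Aa q = (- snd q, - fst q)"
definition Ag :: "int \<times> int \<Rightarrow> int \<times> int" where "Ag q = (- snd q, fst q)"
definition Ax :: "int \<times> int \<Rightarrow> int \<times> int" where "Ax q = (snd q, - fst q)"
definition Af :: "int \<times> int \<Rightarrow> int \<times> int" where "Af q = (- fst q, - snd q)"
definition Am :: "int \<times> int \<Rightarrow> int \<times> int" where "Am q = (fst q, - snd q)"

lemma lin_o: "linrel Ao delta_o" unfolding linrel_def
  by (auto simp: Ao_def step_def split: dir.splits) (case_tac c; simp)+

lemma lin_a: "linrel Aa delta_a" unfolding linrel_def
  by (auto simp: Aa_def step_def split: dir.splits) (case_tac c; simp)+
lemma lin_g: "linrel Ag delta_g" unfolding linrel_def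
  by (auto simp: Ag_def step_def split: dir.splits) (case_tac c; simp)+
lemma lin_x: "linrel Ax delta_x" unfolding linrel_def
  by (auto simp: Ax_def step_def split: dir.splits) (case_tac c; simp)+
lemma lin_f: "linrel Af delta_f" unfolding linrel_def
  by (auto simp: Af_def step_def split: dir.splits) (case_tac c; simp)+
lemma lin_m: "linrel Am delta_m" unfolding linrel_def
  by (auto simp: Am_def step_def split: dir.splits) (case_tac c; simp)+
lemma lin_id: "linrel id id" unfolding linrel_def by simp

lemma inj_tr: assumes "inj A" shows "inj (tr A p)"
proof (rule injI)
  fix x y assume "tr A p x = tr A p y"
  then have "A x = A y" by (simp add: tr_def prod_eq_iff)
  then show "x = y" using assms by (simp add: inj_eq)
qed

lemma inj_o: "inj Ao" by (rule injI) (simp add: Ao_def prod_eq_iff)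
lemma inj_a: "inj Aa" by (rule injI) (simp add: Aa_def prod_eq_iff)
lemma inj_g: "inj Ag" by (rule injI) (simp add: Ag_def prod_eq_iff)
lemma inj_x: "inj Ax" by (rule injI) (simp add: Ax_def prod_eq_iff)
lemma inj_f: "inj Af" by (rule injI) (simp add: Af_def prod_eq_iff)
lemma inj_m: "inj Am" by (rule injI) (simp add: Am_def prod_eq_iff)

definition sq :: "nat \<Rightarrow> (int \<times> int) set" where "sq m = {0..<int m} \<times> {0..<int m}"
definition Q00 :: "nat \<Rightarrow> (int \<times> int) set" where "Q00 N = {0..<int N} \<times> {0..<int N}"
definition Q01 :: "nat \<Rightarrow> (int \<times> int) set" where "Q01 N = {0..<int N} \<times> {int N..<2*int N}"
definition Q10 :: "nat \<Rightarrow> (int \<times> int) set" where "Q10 N = {int N..<2*int N} \<times> {0..<int N}"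
definition Q11 :: "nat \<Rightarrow> (int \<times> int) set" where "Q11 N = {int N..<2*int N} \<times> {int N..<2*int N}"

lemma img:
  assumes "\<And>r. r \<in> S \<Longrightarrow> T r \<in> Q" "\<And>q. q \<in> Q \<Longrightarrow> B q \<in> S \<and> T (B q) = q"
  shows "T ` S = Q"
proof (intro equalityI subsetI)
  fix q assume "q \<in> Q" then show "q \<in> T ` S" using assms(2)[of q] by (metis image_eqI)
qed (use assms(1) in auto)

lemma word4:
  fixes N :: nat
  assumes H: "traces_ham N h (0,0) (int N - 1, 0)"
    and l1: "linrel AAX dAX" and l2: "linrel ABX dBX" and l3: "linrel ACX dCX" and l4: "linrel ADX dDX"
    and i1: "inj AAX" and i2: "inj ABX" and i3: "inj ACX" and i4: "inj ADX"
    and pBX: "pBX = step (tr AAX pAX (int N - 1, 0)) cAX"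
    and pCX: "pCX = step (tr ABX pBX (int N - 1, 0)) cBX"
    and pDX: "pDX = step (tr ACX pCX (int N - 1, 0)) cCX"
    and m1: "tr AAX pAX ` sq N = Q00 N" and m2: "tr ABX pBX ` sq N = Q01 N"
    and m3: "tr ACX pCX ` sq N = Q11 N" and m4: "tr ADX pDX ` sq N = Q10 N"
    and b: "b = tr ADX pDX (int N - 1, 0)"
  shows "traces_ham (2*N) (map dAX h @ [cAX] @ map dBX h @ [cBX] @ map dCX h @ [cCX] @ map dDX h) pAX b"
proof -
  define HH where "HH = path_pts (0,0) h"
  have dH: "distinct HH" and sH: "set HH = sq N" and lH: "last HH = (int N - 1, 0)"
    using H by (auto simp: traces_ham_def Let_def HH_def sq_def)
  have ne: "HH \<noteq> []" by (simp add: HH_def path_ne)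
  have e: "path_pts pAX (map dAX h @ [cAX] @ map dBX h @ [cBX] @ map dCX h @ [cCX] @ map dDX h)
     = map (tr AAX pAX) HH @ map (tr ABX pBX) HH @ map (tr ACX pCX) HH @ map (tr ADX pDX) HH"
    apply (subst path_four[OF refl refl refl])
    using pBX pCX pDX ne lH
    by (simp_all add: path_map[OF l1] path_map[OF l2] path_map[OF l3] path_map[OF l4] last_map HH_def)
  have u: "Q00 N \<union> Q01 N \<union> Q11 N \<union> Q10 N = sq (2*N)"
    by (auto simp: Q00_def Q01_def Q10_def Q11_def sq_def)
  have d: "Q00 N \<inter> Q01 N = {}" "Q00 N \<inter> Q11 N = {}" "Q00 N \<inter> Q10 N = {}"
    "Q01 N \<inter> Q11 N = {}" "Q01 N \<inter> Q10 N = {}" "Q11 N \<inter> Q10 N = {}"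
    by (auto simp: Q00_def Q01_def Q10_def Q11_def)
  have im: "set (map (tr AAX pAX) HH) = Q00 N" "set (map (tr ABX pBX) HH) = Q01 N"
     "set (map (tr ACX pCX) HH) = Q11 N" "set (map (tr ADX pDX) HH) = Q10 N"
    using m1 m2 m3 m4 sH by simp_all
  have di: "distinct (map (tr AAX pAX) HH)" "distinct (map (tr ABX pBX) HH)"
      "distinct (map (tr ACX pCX) HH)" "distinct (map (tr ADX pDX) HH)"
    using dH by (simp_all add: distinct_map inj_on_subset[OF inj_tr[OF i1] subset_UNIV]
      inj_on_subset[OF inj_tr[OF i2] subset_UNIV] inj_on_subset[OF inj_tr[OF i3] subset_UNIV]
      inj_on_subset[OF inj_tr[OF i4] subset_UNIV])
  show ?thesis
    unfolding traces_ham_def Let_def e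
    using im di d u ne lH b
    by (simp add: last_map Un_assoc Int_Un_distrib Int_Un_distrib2 Int_commute, simp add: sq_def)
qed

lemma im1: "tr Ag (int N - 1, 0) ` sq N = Q00 N"
  by (rule img[where B="\<lambda>q. (snd q, int N - 1 - fst q)"]) (auto simp: tr_def Ag_def sq_def Q00_def)
lemma im2: "tr Ag (int N - 1, int N) ` sq N = Q01 N"
  by (rule img[where B="\<lambda>q. (snd q - int N, int N - 1 - fst q)"]) (auto simp: tr_def Ag_def sq_def Q01_def)
lemma im3: "tr Ax (int N, 2 * int N - 1) ` sq N = Q11 N"
  by (rule img[where B="\<lambda>q. (2 * int N - 1 - snd q, fst q - int N)"]) (auto simp: tr_def Ax_def sq_def Q11_def)
lemma im4: "tr Ax (int N, int N - 1) ` sq N = Q10 N"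
  by (rule img[where B="\<lambda>q. (int N - 1 - snd q, fst q - int N)"]) (auto simp: tr_def Ax_def sq_def Q10_def)
lemma im5: "tr Af (int N - 1, int N - 1) ` sq N = Q00 N"
  by (rule img[where B="\<lambda>q. (int N - 1 - fst q, int N - 1 - snd q)"]) (auto simp: tr_def Af_def sq_def Q00_def)
lemma im6: "tr id (0, int N) ` sq N = Q01 N"
  by (rule img[where B="\<lambda>q. (fst q, snd q - int N)"]) (auto simp: tr_def sq_def Q01_def)
lemma im7: "tr id (int N, int N) ` sq N = Q11 N"
  by (rule img[where B="\<lambda>q. (fst q - int N, snd q - int N)"]) (auto simp: tr_def sq_def Q11_def)
lemma im8: "tr Af (2 * int N - 1, int N - 1) ` sq N = Q10 N"
  by (rule img[where B="\<lambda>q. (2 * int N - 1 - fst q, int N - 1 - snd q)"]) (auto simp: tr_def Af_def sq_def Q10_def)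
lemma im9: "tr Am (0, int N - 1) ` sq N = Q00 N"
  by (rule img[where B="\<lambda>q. (fst q, int N - 1 - snd q)"]) (auto simp: tr_def Am_def sq_def Q00_def)
lemma im10: "tr Am (int N, int N - 1) ` sq N = Q10 N"
  by (rule img[where B="\<lambda>q. (fst q - int N, int N - 1 - snd q)"]) (auto simp: tr_def Am_def sq_def Q10_def)
lemma im11: "tr Ao (0, 0) ` sq N = Q00 N"
  by (rule img[where B="\<lambda>q. (snd q, fst q)"]) (auto simp: tr_def Ao_def sq_def Q00_def)
lemma im12: "tr Aa (2 * int N - 1, int N - 1) ` sq N = Q10 N"
  by (rule img[where B="\<lambda>q. (int N - 1 - snd q, 2 * int N - 1 - fst q)"]) (auto simp: tr_def Aa_def sq_def Q10_def)

lemma hilb_ham: "traces_ham (2^n) (hilb n) (0,0) (int (2^n) - 1, 0)"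
proof (induction n)
  case 0 then show ?case by (simp add: traces_ham_def) auto
next
  case (Suc n)
  define N where "N = (2::nat)^n"
  have w: "hilb (Suc n) = map delta_o (hilb n) @ [U] @ map id (hilb n) @ [R] @ map id (hilb n) @ [D] @ map delta_a (hilb n)"
    by simp
  have "traces_ham (2*N) (map delta_o (hilb n) @ [U] @ map id (hilb n) @ [R] @ map id (hilb n) @ [D] @ map delta_a (hilb n))
     (0,0) (2 * int N - 1, 0)"
    apply (rule word4[where AAX=Ao and ABX=id and ACX=id and ADX=Aa and pAX="(0,0)" and pBX="(0, int N)"
          and pCX="(int N, int N)" and pDX="(2 * int N - 1, int N - 1)"])
    using Suc apply (simp add: N_def)
    apply (simp_all add: lin_o lin_a lin_id inj_o inj_a im6 im7 im11 im12)
    apply (simp_all add: tr_def step_def Ao_def Aa_def)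
    done
  then show ?case using w by (simp add: N_def)
qed

theorem mainTheorem1:
  fixes n :: nat
  defines "N \<equiv> (2::nat) ^ n"
  shows "traces_ham (2*N) (h1 n) (int N - 1, 0) (int N, 0)
       \<and> traces_ham (2*N) (h2 n) (int N - 1, int N - 1) (int N, int N - 1)
       \<and> traces_ham (2*N) (h3 n) (0, int N - 1) (2 * int N - 1, int N - 1)
       \<and> traces_ham (2*N) (h4 n) (0, 0) (int N, int N - 1)
       \<and> traces_ham (2*N) (h5 n) (0, int N - 1) (int N, 0)"
proof -
  have H: "traces_ham N (hilb n) (0,0) (int N - 1, 0)" using hilb_ham[of n] by (simp add: N_def)
  have idm: "\<And>xs::dir list. xs = map id xs" by simp
  have w1: "traces_ham (2*N) (h1 n) (int N - 1, 0) (int N, 0)"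
    unfolding h1_def Let_def
    apply (rule word4[where AAX=Ag and ABX=Ag and ACX=Ax and ADX=Ax and pAX="(int N - 1, 0)" and pBX="(int N - 1, int N)"
          and pCX="(int N, 2 * int N - 1)" and pDX="(int N, int N - 1)"])
    apply (rule H)
    apply (simp_all add: lin_o lin_a lin_g lin_x lin_f lin_m lin_id inj_o inj_a inj_g inj_x inj_f inj_m im1 im2 im3 im4)
    apply (simp_all add: tr_def step_def Ao_def Aa_def Ag_def Ax_def Af_def Am_def)
    done
  have e2: "h2 n = map delta_f (hilb n) @ [U] @ map id (hilb n) @ [R] @ map id (hilb n) @ [D] @ map delta_f (hilb n)"
    by (simp add: h2_def Let_def)
  have w2: "traces_ham (2*N) (h2 n) (int N - 1, int N - 1) (int N, int N - 1)"
    unfolding e2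
    apply (rule word4[where AAX=Af and ABX=id and ACX=id and ADX=Af and pAX="(int N - 1, int N - 1)" and pBX="(0, int N)"
          and pCX="(int N, int N)" and pDX="(2 * int N - 1, int N - 1)"])
    apply (rule H)
    apply (simp_all add: lin_o lin_a lin_g lin_x lin_f lin_m lin_id inj_o inj_a inj_g inj_x inj_f inj_m im5 im6 im7 im8)
    apply (simp_all add: tr_def step_def Ao_def Aa_def Ag_def Ax_def Af_def Am_def)
    done
  have w3: "traces_ham (2*N) (h3 n) (0, int N - 1) (2 * int N - 1, int N - 1)"
    unfolding h3_def Let_def
    apply (rule word4[where AAX=Am and ABX=Ag and ACX=Ax and ADX=Am and pAX="(0, int N - 1)" and pBX="(int N - 1, int N)"
          and pCX="(int N, 2 * int N - 1)" and pDX="(int N, int N - 1)"])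
    apply (rule H)
    apply (simp_all add: lin_o lin_a lin_g lin_x lin_f lin_m lin_id inj_o inj_a inj_g inj_x inj_f inj_m im9 im2 im3 im10)
    apply (simp_all add: tr_def step_def Ao_def Aa_def Ag_def Ax_def Af_def Am_def)
    done
  have e4: "h4 n = map delta_o (hilb n) @ [U] @ map id (hilb n) @ [R] @ map id (hilb n) @ [D] @ map delta_f (hilb n)"
    by (simp add: h4_def Let_def)
  have w4: "traces_ham (2*N) (h4 n) (0, 0) (int N, int N - 1)"
    unfolding e4
    apply (rule word4[where AAX=Ao and ABX=id and ACX=id and ADX=Af and pAX="(0, 0)" and pBX="(0, int N)"
          and pCX="(int N, int N)" and pDX="(2 * int N - 1, int N - 1)"])
    apply (rule H)
    apply (simp_all add: lin_o lin_a lin_g lin_x lin_f lin_m lin_id inj_o inj_a inj_g inj_x inj_f inj_m im11 im6 im7 im8)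
    apply (simp_all add: tr_def step_def Ao_def Aa_def Ag_def Ax_def Af_def Am_def)
    done
  have w5: "traces_ham (2*N) (h5 n) (0, int N - 1) (int N, 0)"
    unfolding h5_def Let_def
    apply (rule word4[where AAX=Am and ABX=Ag and ACX=Ax and ADX=Ax and pAX="(0, int N - 1)" and pBX="(int N - 1, int N)"
          and pCX="(int N, 2 * int N - 1)" and pDX="(int N, int N - 1)"])
    apply (rule H)
    apply (simp_all add: lin_o lin_a lin_g lin_x lin_f lin_m lin_id inj_o inj_a inj_g inj_x inj_f inj_m im9 im2 im3 im4)
    apply (simp_all add: tr_def step_def Ao_def Aa_def Ag_def Ax_def Af_def Am_def)
    done
  show ?thesis using w1 w2 w3 w4 w5 by blast
qed
end
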